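(* Let $V$ be an $n$-dimensional real vector space with a non-degenerate inner product $g^\flat=\langle\,,\,\rangle$ of signature $\{p,q\}$, and let $r=\min(p,q)$. Let $\Pi$ be a totally degenerate linear subspace of dimension $r$ with basis $\{k_1,\dots,k_r\}$. Let $T$ be an $r$-dimensional subspace on which $g^\flat$ is negative definite (if $p\le q$) or positive definite (if $p\ge q$), and write $v=v^\parallel+v^\perp$ according to $V=T\oplus T^\perp$. Then: (i) $\{k_1^\parallel,\dots,k_r^\parallel\}$ is linearly independent; (ii) $\{k_1^\perp,\dots,k_r^\perp\}$ is linearly independent; (iii) $\Pi_T:=\operatorname{span}\{k_1^\parallel,\dots,k_r^\parallel,k_1^\perp,\dots,k_r^\perp\}$ is $2r$-dimensional, $g^\flat|_{\Pi_T}$ has signature $\{r,r\}$, and there is an orthonormal basis $\{e_1,\dots,e_{2r}\}$ of $\Pi_T$ with (a) $\operatorname{span}\{e_1,\dots,e_r\}=\operatorname{span}\{k_1^\parallel,\dots,k_r^\parallel\}$, (b) $\operatorname{span}\{e_{r+1},\dots,e_{2r}\}=\operatorname{span}\{k_1^\perp,\dots,k_r^\perp\}$, (c) $\Pi=\operatorname{span}\{e_1+e_{r+1},\dots,e_r+e_{2r}\}$; (iv) a vector $v\in V$ is orthogonal to $\Pi$ if and only if there exists $\overline v\in\Pi_T^\perp$ with $v-\overline v\in\Pi$.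
   Context: A linear subspace $\Pi\subset V$ is totally degenerate if $g^\flat$ restricted to $\Pi$ vanishes identically; such subspaces have dimension at most $\min(p,q)$. *)

theory Defs
  imports "HOL-Analysis.Analysis"
begin

text \<open>A symmetric bilinear form B on a finite-dimensional real vector space 'a
  (the Euclidean structure of 'a is only used for finite dimensionality;
  the relevant form is B).\<close>

definition nondeg_sym_form :: "('a::euclidean_space \<Rightarrow> 'a \<Rightarrow> real) \<Rightarrow> bool" where
  "nondeg_sym_form B \<longleftrightarrow> bilinear B \<and> (\<forall>x y. B x y = B y x) \<and>
     (\<forall>x. (\<forall>y. B x y = 0) \<longrightarrow> x = 0)"

definition pos_def_on :: "('a::real_vector \<Rightarrow> 'a \<Rightarrow> real) \<Rightarrow> 'a set \<Rightarrow> bool" where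
  "pos_def_on B S \<longleftrightarrow> (\<forall>x\<in>S. x \<noteq> 0 \<longrightarrow> B x x > 0)"

definition neg_def_on :: "('a::real_vector \<Rightarrow> 'a \<Rightarrow> real) \<Rightarrow> 'a set \<Rightarrow> bool" where
  "neg_def_on B S \<longleftrightarrow> (\<forall>x\<in>S. x \<noteq> 0 \<longrightarrow> B x x < 0)"

definition sig_pos :: "('a::euclidean_space \<Rightarrow> 'a \<Rightarrow> real) \<Rightarrow> 'a set \<Rightarrow> nat" where
  "sig_pos B W = Max {dim S | S. subspace S \<and> S \<subseteq> W \<and> pos_def_on B S}"

definition sig_neg :: "('a::euclidean_space \<Rightarrow> 'a \<Rightarrow> real) \<Rightarrow> 'a set \<Rightarrow> nat" where
  "sig_neg B W = Max {dim S | S. subspace S \<and> S \<subseteq> W \<and> neg_def_on B S}"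

definition totally_degenerate :: "('a::real_vector \<Rightarrow> 'a \<Rightarrow> real) \<Rightarrow> 'a set \<Rightarrow> bool" where
  "totally_degenerate B P \<longleftrightarrow> subspace P \<and> (\<forall>x\<in>P. \<forall>y\<in>P. B x y = 0)"

definition orth_compl :: "('a::real_vector \<Rightarrow> 'a \<Rightarrow> real) \<Rightarrow> 'a set \<Rightarrow> 'a set" where
  "orth_compl B S = {v. \<forall>t\<in>S. B v t = 0}"

definition par_part :: "('a::real_vector \<Rightarrow> 'a \<Rightarrow> real) \<Rightarrow> 'a set \<Rightarrow> 'a \<Rightarrow> 'a" where
  "par_part B T v = (THE t. t \<in> T \<and> v - t \<in> orth_compl B T)"

definition perp_part :: "('a::real_vector \<Rightarrow> 'a \<Rightarrow> real) \<Rightarrow> 'a set \<Rightarrow> 'a \<Rightarrow> 'a" where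
  "perp_part B T v = v - par_part B T v"

definition lin_indep_family :: "(nat \<Rightarrow> 'a::real_vector) \<Rightarrow> nat \<Rightarrow> bool" where
  "lin_indep_family f m \<longleftrightarrow> inj_on f {..<m} \<and> independent (f ` {..<m})"

definition orthonormal_basis :: "('a::real_vector \<Rightarrow> 'a \<Rightarrow> real) \<Rightarrow> 'a set \<Rightarrow> (nat \<Rightarrow> 'a) \<Rightarrow> nat \<Rightarrow> bool" where
  "orthonormal_basis B W e m \<longleftrightarrow> lin_indep_family e m \<and> span (e ` {..<m}) = W \<and>
     (\<forall>i<m. \<forall>j<m. i \<noteq> j \<longrightarrow> B (e i) (e j) = 0) \<and>
     (\<forall>i<m. B (e i) (e i) = 1 \<or> B (e i) (e i) = -1)"

end

theory Submission
  imports Defs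
begin


lemma fam_indep_iff:
  "lin_indep_family f m \<longleftrightarrow> (\<forall>c. (\<Sum>i<m. c i *\<^sub>R f i) = 0 \<longrightarrow> (\<forall>i<m. c i = 0))"
proof
  assume a: "lin_indep_family f m"
  hence inj: "inj_on f {..<m}" and ind: "independent (f ` {..<m})"
    by (auto simp: lin_indep_family_def)
  show "\<forall>c. (\<Sum>i<m. c i *\<^sub>R f i) = 0 \<longrightarrow> (\<forall>i<m. c i = 0)"
  proof (rule allI, rule impI)
    fix c assume s: "(\<Sum>i<m. c i *\<^sub>R f i) = 0"
    define u where "u v = c (the_inv_into {..<m} f v)" for v
    have "(\<Sum>v\<in>f ` {..<m}. u v *\<^sub>R v) = (\<Sum>i<m. u (f i) *\<^sub>R f i)"
      by (rule sum.reindex[OF inj, unfolded comp_def])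
    also have "\<dots> = (\<Sum>i<m. c i *\<^sub>R f i)"
      by (rule sum.cong) (auto simp: u_def the_inv_into_f_f[OF inj])
    finally have "(\<Sum>v\<in>f ` {..<m}. u v *\<^sub>R v) = 0" using s by simp
    have h: "\<forall>c. (\<Sum>v\<in>f ` {..<m}. c v *\<^sub>R v) = 0 \<longrightarrow> (\<forall>v\<in>f ` {..<m}. c v = 0)"
      using ind dependent_finite[of "f ` {..<m}"] by auto
    have "\<forall>v\<in>f ` {..<m}. u v = 0" using h[rule_format, of u] \<open>(\<Sum>v\<in>f ` {..<m}. u v *\<^sub>R v) = 0\<close> by blast
    thus "\<forall>i<m. c i = 0" by (auto simp: u_def the_inv_into_f_f[OF inj])
  qed
next
  assume a: "\<forall>c. (\<Sum>i<m. c i *\<^sub>R f i) = 0 \<longrightarrow> (\<forall>i<m. c i = 0)"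
  have inj: "inj_on f {..<m}"
  proof (rule inj_onI, rule ccontr)
    fix i j assume ij: "i \<in> {..<m}" "j \<in> {..<m}" "f i = f j" "i \<noteq> j"
    define c where "c l = (if l = i then 1 else 0) - (if l = j then 1 else (0::real))" for l
    have "(\<Sum>l<m. c l *\<^sub>R f l) = (\<Sum>l<m. (if l = i then f l else 0) - (if l = j then f l else 0))"
      by (rule sum.cong) (auto simp: c_def scaleR_left_diff_distrib)
    also have "\<dots> = f i - f j" using ij by (simp add: sum_subtractf)
    finally have "(\<Sum>l<m. c l *\<^sub>R f l) = 0" using ij by simp
    hence "c i = 0" using a ij by blast
    thus False using ij by (simp add: c_def)
  qed
  have "independent (f ` {..<m})"
    unfolding dependent_finite[OF finite_imageI[OF finite_lessThan]]
  proof (rule notI, elim exE conjE bexE)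
    fix u v assume s: "(\<Sum>v\<in>f ` {..<m}. u v *\<^sub>R v) = 0" and v: "v \<in> f ` {..<m}" and nz: "u v \<noteq> 0"
    have "(\<Sum>i<m. u (f i) *\<^sub>R f i) = 0" using s sum.reindex[OF inj, of "\<lambda>v. u v *\<^sub>R v"] by simp
    hence "\<forall>i<m. u (f i) = 0" using a[rule_format, of "\<lambda>i. u (f i)"] by blast
    thus False using v nz by auto
  qed
  thus "lin_indep_family f m" using inj by (simp add: lin_indep_family_def)
qed

lemma B_lsum: "bilinear B \<Longrightarrow> B (\<Sum>i\<in>I. f i) y = (\<Sum>i\<in>I. B (f i) y)"
  using linear_sum[of "\<lambda>x. B x y"] by (simp add: bilinear_def)
lemma B_rsum: "bilinear B \<Longrightarrow> B y (\<Sum>i\<in>I. f i) = (\<Sum>i\<in>I. B y (f i))"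
  using linear_sum[of "\<lambda>x. B y x"] by (simp add: bilinear_def)

lemma orth_indep:
  fixes B :: "'a::real_vector \<Rightarrow> 'a \<Rightarrow> real"
  assumes bil: "bilinear B" and o: "\<forall>i<m. \<forall>j<m. i \<noteq> j \<longrightarrow> B (f i) (f j) = 0"
    and d: "\<forall>i<m. B (f i) (f i) \<noteq> 0"
  shows "lin_indep_family f m"
  unfolding fam_indep_iff
proof (intro allI impI)
  fix c assume s: "(\<Sum>i<m. c i *\<^sub>R f i) = 0"
  fix j assume j: "j < m"
  have "0 = B (\<Sum>i<m. c i *\<^sub>R f i) (f j)" using s bilinear_lzero[OF bil] by simp
  also have "\<dots> = (\<Sum>i<m. c i * B (f i) (f j))" by (simp add: B_lsum[OF bil] bilinear_lmul[OF bil])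
  also have "\<dots> = (\<Sum>i<m. if i = j then c j * B (f j) (f j) else 0)"
    by (rule sum.cong) (use o j in auto)
  also have "\<dots> = c j * B (f j) (f j)" using j by simp
  finally show "c j = 0" using d j by simp
qed

lemma fam_span_eq:
  fixes f :: "nat \<Rightarrow> 'a::euclidean_space"
  assumes "subspace V" "lin_indep_family f m" "\<forall>i<m. f i \<in> V" "dim V \<le> m"
  shows "span (f ` {..<m}) = V"
proof
  have c: "card (f ` {..<m}) = m" using assms(2) by (simp add: lin_indep_family_def card_image)
  show "V \<subseteq> span (f ` {..<m})"
    using card_ge_dim_independent[of "f ` {..<m}" V] assms c by (auto simp: lin_indep_family_def)
  show "span (f ` {..<m}) \<subseteq> V" using assms(1,3) span_minimal[of "f ` {..<m}" V] by auto
qed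

lemma fam_dim: "lin_indep_family f m \<Longrightarrow> dim (span (f ` {..<m})) = m"
  by (simp add: lin_indep_family_def dim_eq_card_independent card_image)

lemma gs:
  fixes B :: "'a::euclidean_space \<Rightarrow> 'a \<Rightarrow> real"
  assumes bil: "bilinear B" and sym: "\<forall>x y. B x y = B y x"
  shows "subspace W \<Longrightarrow> neg_def_on B W \<Longrightarrow> \<exists>e. (\<forall>i<dim W. e i \<in> W) \<and>
     (\<forall>i<dim W. \<forall>j<dim W. i \<noteq> j \<longrightarrow> B (e i) (e j) = 0) \<and> (\<forall>i<dim W. B (e i) (e i) = -1)"
proof (induction "dim W" arbitrary: W)
  case 0 then show ?case by (metis less_nat_zero_code)
next
  case (Suc m W)
  have "\<not> W \<subseteq> {0}" using Suc.hyps(2) dim_eq_0[of W] by (metis nat.distinct(1))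
  then obtain w where w: "w \<in> W" "w \<noteq> 0" by auto
  have bw: "B w w < 0" using Suc.prems(2) w by (auto simp: neg_def_on_def)
  define W' where "W' = {u\<in>W. B u w = 0}"
  have sW': "subspace W'" using Suc.prems(1) unfolding subspace_def W'_def
    by (auto simp: bilinear_ladd[OF bil] bilinear_lmul[OF bil] bilinear_lzero[OF bil])
  have W'W: "W' \<subseteq> W" by (auto simp: W'_def)
  have spW': "span W' = W'" using sW' by simp
  have wnot: "w \<notin> span W'" unfolding spW' using bw by (auto simp: W'_def)
  have eq: "span (insert w W') = W"
  proof
    show "span (insert w W') \<subseteq> W" using span_minimal[of "insert w W'" W] Suc.prems(1) w W'W by auto
    show "W \<subseteq> span (insert w W')"
    proof
      fix u assume u: "u \<in> W"
      have "u - (B u w / B w w) *\<^sub>R w \<in> W'" using u w Suc.prems(1) bw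
        by (auto simp: W'_def bilinear_lsub[OF bil] bilinear_lmul[OF bil] subspace_diff subspace_scale)
      thus "u \<in> span (insert w W')" unfolding span_breakdown_eq using span_base by blast
    qed
  qed
  have "dim W = dim W' + 1" using eq dim_insert[of w W'] wnot by (metis dim_span)
  hence m: "m = dim W'" using Suc.hyps(2) by simp
  have nW': "neg_def_on B W'" using Suc.prems(2) W'W by (auto simp: neg_def_on_def)
  obtain e' where e': "\<forall>i<m. e' i \<in> W'" "\<forall>i<m. \<forall>j<m. i \<noteq> j \<longrightarrow> B (e' i) (e' j) = 0"
     "\<forall>i<m. B (e' i) (e' i) = -1"
    using Suc.hyps(1)[OF m sW' nW'] m by auto
  define c where "c = 1 / sqrt (- B w w)"
  define e where "e = e'(m := c *\<^sub>R w)"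
  have ewm: "B (c *\<^sub>R w) (e' j) = 0" if j: "j < m" for j
  proof -
    have "B (e' j) w = 0" using e'(1) j by (auto simp: W'_def)
    hence "B w (e' j) = 0" using sym by metis
    thus ?thesis by (simp add: bilinear_lmul[OF bil])
  qed
  have cc: "c * c * B w w = -1" using bw unfolding c_def
    by (simp add: field_simps)
  show ?case
  proof (intro exI[of _ e] conjI allI impI)
    fix i assume i: "i < dim W"
    show "e i \<in> W" using i e'(1) W'W w Suc.prems(1) Suc.hyps(2)
      by (cases "i = m") (auto simp: e_def subspace_scale less_Suc_eq)
    show "B (e i) (e i) = -1" using i e'(3) Suc.hyps(2) cc
      by (cases "i = m") (auto simp: e_def less_Suc_eq bilinear_lmul[OF bil] bilinear_rmul[OF bil])
    fix j assume j: "j < dim W" and ij: "i \<noteq> j"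
    show "B (e i) (e j) = 0"
    proof (cases "i = m")
      case True then show ?thesis using ij j Suc.hyps(2) ewm by (auto simp: e_def)
    next
      case False
      show ?thesis
      proof (cases "j = m")
        case True then show ?thesis using ij i Suc.hyps(2) ewm sym False by (auto simp: e_def)
      next
        case False2: False
        then show ?thesis using False i j ij e'(2) Suc.hyps(2) by (auto simp: e_def)
      qed
    qed
  qed
qed

lemma B_zero_span:
  fixes B :: "'a::real_vector \<Rightarrow> 'a \<Rightarrow> real"
  assumes bil: "bilinear B" and h: "\<forall>x\<in>G. B w x = 0" and u: "u \<in> span G"
  shows "B w u = 0"
proof -
  have "subspace {x. B w x = 0}"
    by (auto simp: subspace_def bilinear_radd[OF bil] bilinear_rmul[OF bil] bilinear_rzero[OF bil])
  hence "span G \<subseteq> {x. B w x = 0}" using h by (intro span_minimal) auto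
  thus ?thesis using u by auto
qed

lemma max_dim:
  fixes Q :: "'a::real_vector set \<Rightarrow> bool"
  assumes "Q S0" "dim S0 = r" "\<And>S. Q S \<Longrightarrow> dim S \<le> r"
  shows "Max {dim S | S. Q S} = r"
proof (rule Max_eqI)
  show "finite {dim S | S. Q S}" by (rule finite_subset[of _ "{..r}"]) (use assms(3) in auto)
  show "\<And>y. y \<in> {dim S |S. Q S} \<Longrightarrow> y \<le> r" using assms(3) by auto
  show "r \<in> {dim S |S. Q S}" using assms(1,2) by auto
qed

lemma image_shift: "f ` {r..<2*r} = (\<lambda>l. f (r+l)) ` {..<(r::nat)}"
proof
  show "f ` {r..<2*r} \<subseteq> (\<lambda>l. f (r+l)) ` {..<r}"
  proof
    fix y assume "y \<in> f ` {r..<2*r}"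
    then obtain x where x: "x \<in> {r..<2*r}" "y = f x" by auto
    thus "y \<in> (\<lambda>l. f (r+l)) ` {..<r}" by (intro image_eqI[where x = "x - r"]) auto
  qed
qed auto



locale core =
  fixes B :: "'a::euclidean_space \<Rightarrow> 'a \<Rightarrow> real" and T P :: "'a set" and k :: "nat \<Rightarrow> 'a"
  assumes bil: "bilinear B" and sym: "\<And>x y. B x y = B y x" and nd: "\<And>x. (\<forall>y. B x y = 0) \<Longrightarrow> x = 0"
  and sT: "subspace T" and nT: "neg_def_on B T"
  and maxT: "\<And>S. subspace S \<Longrightarrow> neg_def_on B S \<Longrightarrow> dim S \<le> dim T"
  and tdP: "totally_degenerate B P" and dP: "dim P = dim T"
  and kind: "lin_indep_family k (dim T)" and kspan: "span (k ` {..<dim T}) = P"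
begin

abbreviation "r \<equiv> dim T"
abbreviation "Tp \<equiv> orth_compl B T"
abbreviation "par \<equiv> par_part B T"
abbreviation "perp \<equiv> perp_part B T"

lemma sTp: "subspace Tp"
  by (auto simp: orth_compl_def subspace_def bilinear_ladd[OF bil] bilinear_lmul[OF bil] bilinear_lzero[OF bil])

lemma Tp_T: "x \<in> Tp \<Longrightarrow> t \<in> T \<Longrightarrow> B x t = 0" by (simp add: orth_compl_def)
lemma T_Tp: "x \<in> Tp \<Longrightarrow> t \<in> T \<Longrightarrow> B t x = 0" by (simp add: orth_compl_def sym)

lemma symA: "\<forall>x y. B x y = B y x" using sym by blast

lemma decomp_ex: "\<exists>t\<in>T. v - t \<in> Tp"
proof -
  obtain f where f: "\<forall>i<r. f i \<in> T" "\<forall>i<r. \<forall>j<r. i \<noteq> j \<longrightarrow> B (f i) (f j) = 0"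
     "\<forall>i<r. B (f i) (f i) = -1"
    using gs[OF bil symA sT nT] by (elim exE conjE) auto
  have fi: "lin_indep_family f r" by (rule orth_indep[OF bil f(2)]) (use f(3) in simp)
  have Tsp: "span (f ` {..<r}) = T" by (rule fam_span_eq[OF sT fi f(1)]) simp
  define t where "t = (\<Sum>i<r. (- B v (f i)) *\<^sub>R f i)"
  have tT: "t \<in> T" unfolding t_def using f(1) sT by (intro subspace_sum subspace_scale) auto
  have "B (v - t) (f j) = 0" if j: "j < r" for j
  proof -
    have "B t (f j) = (\<Sum>i<r. (- B v (f i)) * B (f i) (f j))"
      by (simp add: t_def B_lsum[OF bil] bilinear_lmul[OF bil] bilinear_lneg[OF bil])
    also have "\<dots> = (\<Sum>i<r. if i = j then B v (f j) else 0)"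
      by (rule sum.cong) (use f j in auto)
    also have "\<dots> = B v (f j)" using j by simp
    finally show ?thesis by (simp add: bilinear_lsub[OF bil])
  qed
  hence "\<forall>x\<in>f ` {..<r}. B (v - t) x = 0" by blast
  hence "\<forall>u\<in>T. B (v - t) u = 0" using B_zero_span[OF bil, of "f ` {..<r}" "v - t"] unfolding Tsp by blast
  thus ?thesis using tT by (auto simp: orth_compl_def)
qed

lemma decomp_uniq:
  assumes "t \<in> T" "v - t \<in> Tp" "t' \<in> T" "v - t' \<in> Tp" shows "t = t'"
proof (rule ccontr)
  assume ne: "t \<noteq> t'"
  have d: "t - t' \<in> T" using assms sT by (simp add: subspace_diff)
  have e: "t - t' = (v - t') - (v - t)" by simp
  have "B (t - t') (t - t') = B (v - t') (t - t') - B (v - t) (t - t')"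
    by (subst (1) e) (simp add: bilinear_lsub[OF bil])
  also have "\<dots> = 0" using Tp_T assms d by simp
  finally show False using nT d ne by (auto simp: neg_def_on_def)
qed

lemma par_props: "par v \<in> T" "v - par v \<in> Tp"
proof -
  have "\<exists>!t. t \<in> T \<and> v - t \<in> Tp" using decomp_ex decomp_uniq by blast
  from theI'[OF this] show "par v \<in> T" "v - par v \<in> Tp" by (auto simp: par_part_def)
qed

lemma par_eq: "t \<in> T \<Longrightarrow> v - t \<in> Tp \<Longrightarrow> par v = t"
  using decomp_uniq par_props by blast

lemma perp_Tp: "perp v \<in> Tp" using par_props by (simp add: perp_part_def)
lemma par_perp: "par v + perp v = v" by (simp add: perp_part_def)

lemma lin_par: "linear par"
proof (rule linearI)
  fix x y
  show "par (x + y) = par x + par y"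
  proof (rule par_eq)
    show "par x + par y \<in> T" using par_props sT by (simp add: subspace_add)
    show "x + y - (par x + par y) \<in> Tp" unfolding add_diff_add
      by (rule subspace_add[OF sTp par_props(2) par_props(2)])
  qed
  fix c :: real
  show "par (c *\<^sub>R x) = c *\<^sub>R par x"
  proof (rule par_eq)
    show "c *\<^sub>R par x \<in> T" using par_props sT by (simp add: subspace_scale)
    have "c *\<^sub>R x - c *\<^sub>R par x = c *\<^sub>R (x - par x)" by (simp add: scaleR_right_diff_distrib)
    thus "c *\<^sub>R x - c *\<^sub>R par x \<in> Tp" using par_props sTp by (simp add: subspace_scale)
  qed
qed

lemma lin_perp: "linear perp"
proof -
  have "perp = (\<lambda>v. v - par v)" by (simp add: perp_part_def fun_eq_iff)
  thus ?thesis using lin_par linear_compose_sub[OF linear_id lin_par] by (simp add: id_def)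
qed

lemma Tp_not_neg: "x \<in> Tp \<Longrightarrow> \<not> B x x < 0"
proof
  assume x: "x \<in> Tp" and n: "B x x < 0"
  hence x0: "x \<noteq> 0" using bilinear_lzero[OF bil] by auto
  have spT: "span T = T" using sT by simp
  have xT: "x \<notin> span T" unfolding spT using x Tp_T[of x x] n by auto
  define S where "S = span (insert x T)"
  have "dim S = r + 1" unfolding S_def using dim_insert[of x T] xT by simp
  moreover have "neg_def_on B S" unfolding neg_def_on_def
  proof (intro ballI impI)
    fix y assume y: "y \<in> S" "y \<noteq> 0"
    then obtain c where c: "y - c *\<^sub>R x \<in> T" using sT unfolding S_def span_breakdown_eq by (auto simp: spT)
    define t where "t = y - c *\<^sub>R x"
    have yy: "y = t + c *\<^sub>R x" by (simp add: t_def)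
    have tx: "B t x = 0" "B x t = 0" using c x Tp_T T_Tp by (auto simp: t_def)
    have "B y y = B t t + c * c * B x x"
      unfolding yy by (simp add: bilinear_ladd[OF bil] bilinear_radd[OF bil] bilinear_lmul[OF bil] bilinear_rmul[OF bil] tx)
    moreover have "B t t \<le> 0" using nT c by (cases "t = 0") (auto simp: neg_def_on_def t_def bilinear_lzero[OF bil])
    moreover have "c * c * B x x \<le> 0" using n by (simp add: mult_nonneg_nonpos)
    moreover have "t \<noteq> 0 \<or> c \<noteq> 0" using y yy by auto
    moreover have "t \<noteq> 0 \<Longrightarrow> B t t < 0" using nT c by (auto simp: neg_def_on_def t_def)
    moreover have "c \<noteq> 0 \<Longrightarrow> c * c * B x x < 0" using n by (metis mult_pos_neg not_real_square_gt_zero)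
    ultimately show "B y y < 0" by linarith
  qed
  ultimately have "r + 1 \<le> r" using maxT[of S] by (simp add: S_def)
  thus False by simp
qed

lemma Tp_pos: "x \<in> Tp \<Longrightarrow> x \<noteq> 0 \<Longrightarrow> B x x > 0"
proof (rule ccontr)
  assume x: "x \<in> Tp" "x \<noteq> 0" and "\<not> B x x > 0"
  hence xx: "B x x = 0" using Tp_not_neg by force
  obtain y where y: "B x y \<noteq> 0" using nd x by blast
  define z where "z = perp y"
  have zT: "z \<in> Tp" using perp_Tp by (simp add: z_def)
  have "B x (par y) = 0" using Tp_T x par_props by simp
  hence bz: "B x z \<noteq> 0" using y by (simp add: z_def perp_part_def bilinear_rsub[OF bil])
  define b where "b = B x z"
  define c where "c = B z z"
  define eps where "eps = - b / (\<bar>c\<bar> + 1)"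
  define w where "w = x + eps *\<^sub>R z"
  have wT: "w \<in> Tp" using x zT sTp by (simp add: w_def subspace_add subspace_scale)
  have "B w w = 2 * eps * b + eps * eps * c"
    unfolding w_def using xx
    by (simp add: bilinear_ladd[OF bil] bilinear_radd[OF bil] bilinear_lmul[OF bil] bilinear_rmul[OF bil] b_def c_def sym[of z x] algebra_simps)
  also have "\<dots> < 0"
  proof -
    have p: "\<bar>c\<bar> + 1 > 0" by simp
    have b2: "b * b > 0" using bz by (metis b_def not_real_square_gt_zero)
    have "eps * eps * c \<le> eps * eps * \<bar>c\<bar>" by (simp add: mult_left_mono)
    also have "\<dots> = b * b * \<bar>c\<bar> / ((\<bar>c\<bar> + 1) * (\<bar>c\<bar> + 1))" by (simp add: eps_def)
    also have "\<dots> = (b * b / (\<bar>c\<bar> + 1)) * (\<bar>c\<bar> / (\<bar>c\<bar> + 1))" by simp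
    also have "\<dots> \<le> b * b / (\<bar>c\<bar> + 1)"
      by (rule mult_left_le) (use p b2 in auto)
    finally have "eps * eps * c \<le> b * b / (\<bar>c\<bar> + 1)" .
    moreover have "2 * eps * b = - 2 * (b * b / (\<bar>c\<bar> + 1))" by (simp add: eps_def)
    moreover have "b * b / (\<bar>c\<bar> + 1) > 0" using p b2 by simp
    ultimately show ?thesis by linarith
  qed
  finally show False using Tp_not_neg wT by simp
qed

end



context core begin

lemma sP: "subspace P" using tdP by (simp add: totally_degenerate_def)
lemma BP: "x \<in> P \<Longrightarrow> y \<in> P \<Longrightarrow> B x y = 0" using tdP by (simp add: totally_degenerate_def)
lemma kP: "i < r \<Longrightarrow> k i \<in> P" using kspan span_base[of "k i" "k ` {..<r}"] by auto

lemma par_perp_P: assumes "x \<in> P" "y \<in> P" shows "B (par x) (par y) = - B (perp x) (perp y)"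
proof -
  have "0 = B (par x + perp x) (par y + perp y)" using BP assms par_perp by simp
  also have "\<dots> = B (par x) (par y) + B (par x) (perp y) + B (perp x) (par y) + B (perp x) (perp y)"
    by (simp add: bilinear_ladd[OF bil] bilinear_radd[OF bil])
  also have "B (par x) (perp y) = 0" using T_Tp par_props perp_Tp by blast
  also have "B (perp x) (par y) = 0" using Tp_T par_props perp_Tp by blast
  finally show ?thesis by simp
qed

lemma par_inj: assumes "x \<in> P" "par x = 0" shows "x = 0"
proof -
  have "B (perp x) (perp x) = 0" using par_perp_P[OF assms(1) assms(1)] assms(2) bilinear_lzero[OF bil] by simp
  hence "perp x = 0" using Tp_pos perp_Tp by force
  thus ?thesis using par_perp[of x] assms(2) by simp
qed

lemma perp_inj: assumes "x \<in> P" "perp x = 0" shows "x = 0"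
proof -
  have "B (par x) (par x) = 0" using par_perp_P[OF assms(1) assms(1)] assms(2) bilinear_lzero[OF bil] by simp
  hence "par x = 0" using nT par_props unfolding neg_def_on_def by force
  thus ?thesis using par_perp[of x] assms(2) by simp
qed

lemma indep_img:
  assumes g: "linear g" and inj: "\<And>x. x \<in> P \<Longrightarrow> g x = 0 \<Longrightarrow> x = 0"
  shows "lin_indep_family (\<lambda>i. g (k i)) r"
  unfolding fam_indep_iff
proof (rule allI, rule impI)
  fix c assume s: "(\<Sum>i<r. c i *\<^sub>R g (k i)) = 0"
  have "g (\<Sum>i<r. c i *\<^sub>R k i) = (\<Sum>i<r. c i *\<^sub>R g (k i))"
    by (simp add: linear_sum[OF g] linear_scale[OF g])
  moreover have "(\<Sum>i<r. c i *\<^sub>R k i) \<in> P" using kP sP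
    by (intro subspace_sum subspace_scale) auto
  ultimately have "(\<Sum>i<r. c i *\<^sub>R k i) = 0" using inj s by simp
  thus "\<forall>i<r. c i = 0" using kind unfolding fam_indep_iff by blast
qed


theorem core_main:
  "lin_indep_family (\<lambda>i. par (k i)) r
    \<and> lin_indep_family (\<lambda>i. perp (k i)) r
    \<and> (let PT = span ((\<lambda>i. par (k i)) ` {..<r} \<union> (\<lambda>i. perp (k i)) ` {..<r})
       in dim PT = 2 * r \<and> sig_pos B PT = r \<and> sig_neg B PT = r
        \<and> (\<exists>e. orthonormal_basis B PT e (2 * r)
              \<and> span (e ` {..<r}) = span ((\<lambda>i. par (k i)) ` {..<r})
              \<and> span (e ` {r..<2 * r}) = span ((\<lambda>i. perp (k i)) ` {..<r})
              \<and> P = span ((\<lambda>i. e i + e (r + i)) ` {..<r}))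
        \<and> (\<forall>v. (\<forall>w\<in>P. B v w = 0) \<longleftrightarrow> (\<exists>vb\<in>orth_compl B PT. v - vb \<in> P)))"
proof -
  define kp where "kp = (\<lambda>i. par (k i))"
  define kq where "kq = (\<lambda>i. perp (k i))"
  define Wa where "Wa = span (kp ` {..<r})"
  define Wb where "Wb = span (kq ` {..<r})"
  define PT where "PT = span (kp ` {..<r} \<union> kq ` {..<r})"
  have i1: "lin_indep_family kp r" unfolding kp_def by (rule indep_img[OF lin_par par_inj])
  have i2: "lin_indep_family kq r" unfolding kq_def by (rule indep_img[OF lin_perp perp_inj])
  have sWa: "subspace Wa" and sWb: "subspace Wb" and sPT: "subspace PT"
    by (simp_all add: Wa_def Wb_def PT_def)
  have "kp ` {..<r} \<subseteq> T" using par_props by (auto simp: kp_def)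
  hence Wa_T: "Wa \<subseteq> T" unfolding Wa_def by (rule span_minimal[OF _ sT])
  have "kq ` {..<r} \<subseteq> Tp" using perp_Tp by (auto simp: kq_def)
  hence Wb_Tp: "Wb \<subseteq> Tp" unfolding Wb_def by (rule span_minimal[OF _ sTp])
  have dWa: "dim Wa = r" unfolding Wa_def by (rule fam_dim[OF i1])
  have dWb: "dim Wb = r" unfolding Wb_def by (rule fam_dim[OF i2])
  have Wa_img: "Wa = par ` P"
  proof -
    have "kp ` {..<r} = par ` (k ` {..<r})" by (simp add: kp_def image_image)
    thus ?thesis unfolding Wa_def kspan[symmetric] by (simp add: span_linear_image[OF lin_par])
  qed
  have Wb_img: "Wb = perp ` P"
  proof -
    have "kq ` {..<r} = perp ` (k ` {..<r})" by (simp add: kq_def image_image)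
    thus ?thesis unfolding Wb_def kspan[symmetric] by (simp add: span_linear_image[OF lin_perp])
  qed
  have nWa: "neg_def_on B Wa" using nT Wa_T by (auto simp: neg_def_on_def)
  have pWb: "pos_def_on B Wb" using Tp_pos Wb_Tp by (auto simp: pos_def_on_def)
  obtain e0 where e0: "\<forall>i<r. e0 i \<in> Wa" "\<forall>i<r. \<forall>j<r. i \<noteq> j \<longrightarrow> B (e0 i) (e0 j) = 0"
     "\<forall>i<r. B (e0 i) (e0 i) = -1"
    using gs[OF bil symA sWa nWa] unfolding dWa by (elim exE conjE) auto
  define p where "p i = (SOME x. x \<in> P \<and> par x = e0 i)" for i
  have p: "p i \<in> P \<and> par (p i) = e0 i" if i: "i < r" for i
  proof -
    have "e0 i \<in> par ` P" using e0(1) i Wa_img by simp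
    then obtain x where x: "x \<in> P" "e0 i = par x" by (rule imageE)
    have "\<exists>x. x \<in> P \<and> par x = e0 i" using x by metis
    hence "(SOME x. x \<in> P \<and> par x = e0 i) \<in> P \<and> par (SOME x. x \<in> P \<and> par x = e0 i) = e0 i"
      by (rule someI_ex)
    thus ?thesis by (simp add: p_def)
  qed
  define e where "e i = (if i < r then e0 i else perp (p (i - r)))" for i
  have eB: "B (e i) (e j) = (if i = j then (if i < r then -1 else 1) else 0)"
    if i: "i < 2 * r" and j: "j < 2 * r" for i j
  proof (cases "i < r")
    case True
    show ?thesis
    proof (cases "j < r")
      case True2: True
      then show ?thesis using True e0(2)[rule_format, of i j] e0(3)[rule_format, of i] by (cases "i = j") (simp_all add: e_def)
    next
      case False
      have "e0 i \<in> T" using e0(1) Wa_T True by auto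
      hence "B (e0 i) (perp (p (j - r))) = 0" by (rule T_Tp[OF perp_Tp])
      then show ?thesis using True False by (simp add: e_def)
    qed
  next
    case False
    show ?thesis
    proof (cases "j < r")
      case True2: True
      have "e0 j \<in> T" using e0(1) Wa_T True2 by auto
      hence "B (perp (p (i - r))) (e0 j) = 0" by (rule Tp_T[OF perp_Tp])
      then show ?thesis using True2 False by (simp add: e_def)
    next
      case False2: False
      have a: "i - r < r" "j - r < r" using i j False False2 by auto
      have "B (e i) (e j) = - B (e0 (i - r)) (e0 (j - r))"
        using par_perp_P[of "p (i - r)" "p (j - r)"] p[OF a(1)] p[OF a(2)] False False2 by (simp add: e_def)
      moreover have "i - r = j - r \<longleftrightarrow> i = j" using False False2 by auto
      ultimately show ?thesis using e0(2)[rule_format, of "i - r" "j - r"] e0(3)[rule_format, of "i - r"] a False False2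
        by (cases "i = j") simp_all
    qed
  qed
  have ei: "lin_indep_family e (2 * r)"
    by (rule orth_indep[OF bil]) (simp_all add: eB)
  have ei1: "lin_indep_family e r"
    by (rule orth_indep[OF bil]) (simp_all add: eB)
  have ei2: "lin_indep_family (\<lambda>l. e (r + l)) r"
    by (rule orth_indep[OF bil]) (simp_all add: eB)
  have e_lo: "e i = e0 i" if "i < r" for i using that by (simp add: e_def)
  have e_hi: "e (r + i) = perp (p i)" for i by (simp add: e_def)
  have eWa: "\<forall>i<r. e i \<in> Wa" using e0(1) e_lo by simp
  have eWb: "\<forall>i<r. e (r + i) \<in> Wb" unfolding Wb_img e_hi using p by blast
  have span1: "span (e ` {..<r}) = Wa"
    by (rule fam_span_eq[OF sWa ei1 eWa]) (simp add: dWa)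
  have span2: "span (e ` {r..<2 * r}) = Wb"
    unfolding image_shift by (rule fam_span_eq[OF sWb ei2 eWb]) (simp add: dWb)
  have hP: "e i + e (r + i) = p i" if "i < r" for i
    using e_lo[OF that] e_hi[of i] p[OF that] par_perp[of "p i"] by simp
  have ip: "lin_indep_family p r"
    unfolding fam_indep_iff
  proof (rule allI, rule impI)
    fix c assume s: "(\<Sum>i<r. c i *\<^sub>R p i) = 0"
    have "par (\<Sum>i<r. c i *\<^sub>R p i) = (\<Sum>i<r. c i *\<^sub>R e i)"
      by (simp add: linear_sum[OF lin_par] linear_scale[OF lin_par] p e_lo)
    hence "(\<Sum>i<r. c i *\<^sub>R e i) = 0" using s linear_0[OF lin_par] by simp
    thus "\<forall>i<r. c i = 0" using ei1 unfolding fam_indep_iff by blast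
  qed
  have span3: "P = span ((\<lambda>i. e i + e (r + i)) ` {..<r})"
  proof -
    have "(\<lambda>i. e i + e (r + i)) ` {..<r} = p ` {..<r}" using hP by simp
    moreover have "span (p ` {..<r}) = P"
      by (rule fam_span_eq[OF sP ip]) (simp_all add: p dP)
    ultimately show ?thesis by simp
  qed
  have WaPT: "Wa \<subseteq> PT" unfolding Wa_def PT_def by (rule span_mono) blast
  have WbPT: "Wb \<subseteq> PT" unfolding Wb_def PT_def by (rule span_mono) blast
  have ePT: "\<forall>i<2 * r. e i \<in> PT"
  proof (intro allI impI)
    fix i assume i: "i < 2 * r"
    show "e i \<in> PT"
    proof (cases "i < r")
      case True thus ?thesis using eWa WaPT by auto
    next
      case False
      hence "e i = e (r + (i - r))" by simp
      moreover have "i - r < r" using i False by simp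
      ultimately show ?thesis using eWb WbPT by auto
    qed
  qed
  have dPTle: "dim PT \<le> 2 * r"
  proof -
    have "dim PT = dim (kp ` {..<r} \<union> kq ` {..<r})" by (simp add: PT_def)
    also have "\<dots> \<le> card (kp ` {..<r} \<union> kq ` {..<r})" by (rule dim_le_card') simp
    also have "\<dots> \<le> card (kp ` {..<r}) + card (kq ` {..<r})" by (rule card_Un_le)
    also have "\<dots> \<le> r + r" using card_image_le[of "{..<r}" kp] card_image_le[of "{..<r}" kq] by simp
    finally show ?thesis by simp
  qed
  have PT_eq: "span (e ` {..<2 * r}) = PT"
    by (rule fam_span_eq[OF sPT ei ePT dPTle])
  have dPT: "dim PT = 2 * r" using fam_dim[OF ei] PT_eq by simp
  have onb: "orthonormal_basis B PT e (2 * r)"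
    unfolding orthonormal_basis_def using ei PT_eq eB by auto
  have sp: "sig_pos B PT = r" unfolding sig_pos_def
  proof (rule max_dim[of _ Wb])
    show "subspace Wb \<and> Wb \<subseteq> PT \<and> pos_def_on B Wb" using sWb WbPT pWb by simp
    show "dim Wb = r" by (rule dWb)
    fix S assume "subspace S \<and> S \<subseteq> PT \<and> pos_def_on B S"
    hence sS: "subspace S" and SPT: "S \<subseteq> PT" and pS: "pos_def_on B S" by auto
    have "S \<inter> Wa \<subseteq> {0}"
    proof
      fix x assume x: "x \<in> S \<inter> Wa"
      show "x \<in> {0}"
      proof (rule ccontr)
        assume "x \<notin> {0}"
        hence "B x x > 0" "B x x < 0" using x pS nWa by (auto simp: pos_def_on_def neg_def_on_def)
        thus False by simp
      qed
    qed
    hence d0: "dim (S \<inter> Wa) = 0" by simp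
    have "{x + y |x y. x \<in> S \<and> y \<in> Wa} \<subseteq> PT" using SPT WaPT sPT by (auto intro: subspace_add)
    hence "dim {x + y |x y. x \<in> S \<and> y \<in> Wa} \<le> dim PT" by (rule dim_subset)
    thus "dim S \<le> r" using dim_sums_Int[OF sS sWa] d0 dPT dWa by linarith
  qed
  have sn: "sig_neg B PT = r" unfolding sig_neg_def
  proof (rule max_dim[of _ Wa])
    show "subspace Wa \<and> Wa \<subseteq> PT \<and> neg_def_on B Wa" using sWa WaPT nWa by simp
    show "dim Wa = r" by (rule dWa)
    fix S assume "subspace S \<and> S \<subseteq> PT \<and> neg_def_on B S"
    hence sS: "subspace S" and SPT: "S \<subseteq> PT" and nS: "neg_def_on B S" by auto
    have "S \<inter> Wb \<subseteq> {0}"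
    proof
      fix x assume x: "x \<in> S \<inter> Wb"
      show "x \<in> {0}"
      proof (rule ccontr)
        assume "x \<notin> {0}"
        hence "B x x > 0" "B x x < 0" using x pWb nS by (auto simp: pos_def_on_def neg_def_on_def)
        thus False by simp
      qed
    qed
    hence d0: "dim (S \<inter> Wb) = 0" by simp
    have "{x + y |x y. x \<in> S \<and> y \<in> Wb} \<subseteq> PT" using SPT WbPT sPT by (auto intro: subspace_add)
    hence "dim {x + y |x y. x \<in> S \<and> y \<in> Wb} \<le> dim PT" by (rule dim_subset)
    thus "dim S \<le> r" using dim_sums_Int[OF sS sWb] d0 dPT dWb by linarith
  qed
  have key: "B (e i + e (r + i)) (e j) = (if j < r then (if i = j then -1 else 0) else (if j = r + i then 1 else 0))"
    if i: "i < r" and j: "j < 2 * r" for i j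
  proof -
    have "B (e i + e (r + i)) (e j) = B (e i) (e j) + B (e (r + i)) (e j)"
      by (simp add: bilinear_ladd[OF bil])
    also have "\<dots> = (if i = j then -1 else 0) + (if r + i = j then 1 else 0)"
      using i j by (simp add: eB)
    finally show ?thesis using i by auto
  qed
  have PPT: "P \<subseteq> PT"
  proof -
    have "(\<lambda>i. e i + e (r + i)) ` {..<r} \<subseteq> PT" using ePT sPT by (auto intro: subspace_add)
    thus ?thesis unfolding span3 by (rule span_minimal[OF _ sPT])
  qed
  have iv: "\<forall>v. (\<forall>w\<in>P. B v w = 0) \<longleftrightarrow> (\<exists>vb\<in>orth_compl B PT. v - vb \<in> P)"
  proof (intro allI iffI)
    fix v assume h: "\<forall>w\<in>P. B v w = 0"
    define x where "x = (\<Sum>i<r. (- B v (e i)) *\<^sub>R (e i + e (r + i)))"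
    have xP: "x \<in> P" unfolding x_def using hP p sP by (intro subspace_sum subspace_scale) auto
    have Bx: "B x (e j) = (\<Sum>i<r. (- B v (e i)) * B (e i + e (r + i)) (e j))" for j
      by (simp add: x_def B_lsum[OF bil] bilinear_lmul[OF bil] bilinear_lneg[OF bil])
    have "B (v - x) (e j) = 0" if j: "j < 2 * r" for j
    proof (cases "j < r")
      case True
      have "B x (e j) = (\<Sum>i<r. if i = j then B v (e j) else 0)"
        unfolding Bx by (rule sum.cong) (simp_all add: key j True)
      also have "\<dots> = B v (e j)" using True by simp
      finally show ?thesis by (simp add: bilinear_lsub[OF bil])
    next
      case False
      define l where "l = j - r"
      have l: "l < r" "j = r + l" using j False by (auto simp: l_def)
      have "B x (e j) = (\<Sum>i<r. if i = l then - B v (e l) else 0)"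
        unfolding Bx by (rule sum.cong) (use l False in \<open>auto simp: key\<close>)
      also have "\<dots> = - B v (e l)" using l by simp
      also have "\<dots> = B v (e j)"
      proof -
        have "B v (e l + e (r + l)) = 0" using h hP[OF l(1)] p[OF l(1)] by simp
        thus ?thesis using l by (simp add: bilinear_radd[OF bil])
      qed
      finally show ?thesis by (simp add: bilinear_lsub[OF bil])
    qed
    hence "\<forall>y\<in>e ` {..<2 * r}. B (v - x) y = 0" by blast
    hence "\<forall>t\<in>PT. B (v - x) t = 0" using B_zero_span[OF bil, of "e ` {..<2 * r}" "v - x"] unfolding PT_eq by blast
    hence "v - x \<in> orth_compl B PT" by (simp add: orth_compl_def)
    moreover have "v - (v - x) \<in> P" using xP by simp
    ultimately show "\<exists>vb\<in>orth_compl B PT. v - vb \<in> P" by blast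
  next
    fix v assume "\<exists>vb\<in>orth_compl B PT. v - vb \<in> P"
    then obtain vb where vb: "vb \<in> orth_compl B PT" "v - vb \<in> P" by blast
    show "\<forall>w\<in>P. B v w = 0"
    proof
      fix w assume w: "w \<in> P"
      have "B v w = B vb w + B (v - vb) w" by (simp add: bilinear_lsub[OF bil])
      also have "B vb w = 0" using vb(1) PPT w by (auto simp: orth_compl_def)
      also have "B (v - vb) w = 0" using BP vb(2) w by simp
      finally show "B v w = 0" by simp
    qed
  qed
  have ex: "\<exists>e. orthonormal_basis B PT e (2 * r) \<and> span (e ` {..<r}) = Wa
              \<and> span (e ` {r..<2 * r}) = Wb \<and> P = span ((\<lambda>i. e i + e (r + i)) ` {..<r})"
    using onb span1 span2 span3 by blast
  show ?thesis
    unfolding Let_def kp_def[symmetric] kq_def[symmetric] PT_def[symmetric] Wa_def[symmetric] Wb_def[symmetric]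
    using i1 i2 dPT sp sn ex iv by blast
qed


end

lemma sig_neg_ge:
  fixes B :: "'a::euclidean_space \<Rightarrow> 'a \<Rightarrow> real"
  assumes "subspace S" "neg_def_on B S"
  shows "dim S \<le> sig_neg B UNIV"
  unfolding sig_neg_def
proof (rule Max_ge)
  show "finite {dim S |S. subspace S \<and> S \<subseteq> UNIV \<and> neg_def_on B S}"
    by (rule finite_subset[of _ "{..dim (UNIV::'a set)}"]) (auto simp del: dim_UNIV intro: dim_subset)
  show "dim S \<in> {dim S |S. subspace S \<and> S \<subseteq> UNIV \<and> neg_def_on B S}" using assms by blast
qed

lemma neg_bil: "bilinear B \<Longrightarrow> bilinear (\<lambda>x y. - B x y)"
  unfolding bilinear_def by (auto intro: linear_compose_neg)
lemma neg_orth: "orth_compl (\<lambda>x y. - B x y) S = orth_compl B S" by (simp add: orth_compl_def)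
lemma neg_par: "par_part (\<lambda>x y. - B x y) T = par_part B T" by (simp add: par_part_def neg_orth fun_eq_iff)
lemma neg_perp: "perp_part (\<lambda>x y. - B x y) T = perp_part B T" by (simp add: perp_part_def neg_par fun_eq_iff)
lemma neg_posd: "pos_def_on (\<lambda>x y. - B x y) S = neg_def_on B S" by (simp add: pos_def_on_def neg_def_on_def)
lemma neg_negd: "neg_def_on (\<lambda>x y. - B x y) S = pos_def_on B S" by (simp add: pos_def_on_def neg_def_on_def)
lemma neg_sigp: "sig_pos (\<lambda>x y. - B x y) W = sig_neg B W" by (simp add: sig_pos_def sig_neg_def neg_posd)
lemma neg_sign: "sig_neg (\<lambda>x y. - B x y) W = sig_pos B W" by (simp add: sig_pos_def sig_neg_def neg_negd)
lemma neg_onb: "orthonormal_basis (\<lambda>x y. - B x y) W e m = orthonormal_basis B W e m"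
  by (auto simp: orthonormal_basis_def)
lemma neg_td: "totally_degenerate (\<lambda>x y. - B x y) P = totally_degenerate B P"
  by (simp add: totally_degenerate_def)

theorem mainTheorem11:
  fixes B :: "'a::euclidean_space \<Rightarrow> 'a \<Rightarrow> real"
    and p q r :: nat and P T :: "'a set" and k :: "nat \<Rightarrow> 'a"
  assumes form: "nondeg_sym_form B"
    and p_def: "p = sig_neg B UNIV" and q_def: "q = sig_pos B UNIV"
    and r_def: "r = min p q"
    and P_tdeg: "totally_degenerate B P" and P_dim: "dim P = r"
    and k_basis: "lin_indep_family k r" "span (k ` {..<r}) = P"
    and T_sub: "subspace T" and T_dim: "dim T = r"
    and T_def: "(p \<le> q \<and> neg_def_on B T) \<or> (q \<le> p \<and> pos_def_on B T)"
  shows "lin_indep_family (\<lambda>i. par_part B T (k i)) r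
    \<and> lin_indep_family (\<lambda>i. perp_part B T (k i)) r
    \<and> (let PT = span ((\<lambda>i. par_part B T (k i)) ` {..<r} \<union> (\<lambda>i. perp_part B T (k i)) ` {..<r})
       in dim PT = 2 * r \<and> sig_pos B PT = r \<and> sig_neg B PT = r
        \<and> (\<exists>e. orthonormal_basis B PT e (2 * r)
              \<and> span (e ` {..<r}) = span ((\<lambda>i. par_part B T (k i)) ` {..<r})
              \<and> span (e ` {r..<2 * r}) = span ((\<lambda>i. perp_part B T (k i)) ` {..<r})
              \<and> P = span ((\<lambda>i. e i + e (r + i)) ` {..<r}))
        \<and> (\<forall>v. (\<forall>w\<in>P. B v w = 0) \<longleftrightarrow> (\<exists>vb\<in>orth_compl B PT. v - vb \<in> P)))"
proof -
  have bil: "bilinear B" and sym: "\<And>x y. B x y = B y x" and nd: "\<And>x. (\<forall>y. B x y = 0) \<Longrightarrow> x = 0"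
    using form by (auto simp: nondeg_sym_form_def)
  show ?thesis
  proof (cases "p \<le> q \<and> neg_def_on B T")
    case True
    have rT: "r = dim T" using T_dim by simp
    have "core B T P k"
    proof (unfold_locales)
      show "neg_def_on B T" using True by simp
      fix S :: "'a set" assume "subspace S" "neg_def_on B S"
      thus "dim S \<le> dim T" using sig_neg_ge[of S B] p_def r_def True T_dim by simp
    qed (use bil sym nd T_sub P_tdeg P_dim T_dim k_basis in \<open>simp_all add: rT[symmetric]\<close>)
    from core.core_main[OF this] show ?thesis unfolding rT[symmetric] .
  next
    case False
    hence F: "q \<le> p" "pos_def_on B T" using T_def by auto
    have rT: "r = dim T" using T_dim by simp
    have "core (\<lambda>x y. - B x y) T P k"
    proof (unfold_locales)
      show "bilinear (\<lambda>x y. - B x y)" by (rule neg_bil[OF bil])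
      show "\<And>x y. - B x y = - B y x" using sym by simp
      show "\<And>x. \<forall>y. - B x y = 0 \<Longrightarrow> x = 0" using nd by simp
      show "neg_def_on (\<lambda>x y. - B x y) T" using F by (simp add: neg_negd)
      show "totally_degenerate (\<lambda>x y. - B x y) P" using P_tdeg by (simp add: neg_td)
      fix S :: "'a set" assume "subspace S" "neg_def_on (\<lambda>x y. - B x y) S"
      thus "dim S \<le> dim T" using sig_neg_ge[of S "\<lambda>x y. - B x y"] q_def r_def F T_dim
        by (simp add: neg_sign)
    qed (use T_sub P_dim T_dim k_basis in \<open>simp_all add: rT[symmetric]\<close>)
    from core.core_main[OF this] show ?thesis
      unfolding rT[symmetric] neg_par neg_perp neg_sigp neg_sign neg_onb neg_orth neg_equal_0_iff_equal Let_def
      by blast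
  qed
qed

end
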